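(* In the setting described in the context, if the pricing kernel $\{\pi_t\}$ is asymptotically tail-Pareto with index $\lambda>0$, then for all $t\ge0$ the long tail-Pareto rate satisfies $0<L^{(\lambda)}_{t\infty}<\infty$ and takes the form $$L^{(\lambda)}_{t\infty}=\lambda\left(\pi_t/\theta_t\right)^{1/\lambda},$$ where $\{\theta_t\}_{t\ge0}$ is a strictly positive supermartingale.
   Context: Let $(\Omega,\mathcal F,\mathbb P)$ be a probability space with a filtration $\{\mathcal F_t\}_{t\ge0}$ satisfying the usual conditions; (in)equalities between random variables hold a.s. A pricing kernel is an $\{\mathcal F_t\}$-adapted càdlàg semimartingale $\{\pi_t\}_{t\ge0}$ with (a) $\pi_t>0$, (b) $\mathbb E[\pi_t]<\infty$ for all $t\ge0$, (c) $\liminf_{t\to\infty}\mathbb E[\pi_t]=0$. The associated discount bond prices are $P_{tT}=\pi_t^{-1}\mathbb E[\pi_T\mid\mathcal F_t]$ for $0\le t<T$. A pricing kernel is asymptotically tail-Pareto with index $\lambda>0$ if (i) $\liminf_{t\to\infty}t^\lambda\pi_t>0$ and (ii) $\liminf_{t\to\infty}\mathbb E[t^\lambda\pi_t]<\infty$. The tail-Pareto rate $L^{(\lambda)}_{tT}$ is defined by $P_{tT}=\left[1+\lambda^{-1}(T-t)L^{(\lambda)}_{tT}\right]^{-\lambda}$, and the long tail-Pareto rate is $L^{(\lambda)}_{t\infty}=\limsup_{T\to\infty}L^{(\lambda)}_{tT}$. Limits superior/inferior over the continuum parameter $T$ of families of $\mathcal F_t$-measurable random variables are essential ones: $\limsup_{T\to\infty}A_T:=\operatorname{ess\,inf}_{x}\operatorname{ess\,sup}_{T\ge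 x}A_T$ and $\liminf_{T\to\infty}A_T:=\operatorname{ess\,sup}_{x}\operatorname{ess\,inf}_{T\ge x}A_T$, taken among $\mathcal F_t$-measurable random variables. *)

theory Defs
  imports "HOL-Probability.Probability"
begin

definition filtration_on :: "'a measure \<Rightarrow> (real \<Rightarrow> 'a measure) \<Rightarrow> bool" where
  "filtration_on M F \<longleftrightarrow>
     (\<forall>t\<ge>0. subalgebra M (F t)) \<and>
     (\<forall>s t. 0 \<le> s \<longrightarrow> s \<le> t \<longrightarrow> sets (F s) \<subseteq> sets (F t))"

definition usual_conditions :: "'a measure \<Rightarrow> (real \<Rightarrow> 'a measure) \<Rightarrow> bool" where
  "usual_conditions M F \<longleftrightarrow>
     complete_measure M \<and>
     null_sets M \<subseteq> sets (F 0) \<and>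
     (\<forall>t\<ge>0. sets (F t) = (\<Inter>s\<in>{t<..}. sets (F s)))"

definition adapted :: "(real \<Rightarrow> 'a measure) \<Rightarrow> (real \<Rightarrow> 'a \<Rightarrow> real) \<Rightarrow> bool" where
  "adapted F X \<longleftrightarrow> (\<forall>t\<ge>0. X t \<in> borel_measurable (F t))"

definition cadlag_paths :: "'a measure \<Rightarrow> (real \<Rightarrow> 'a \<Rightarrow> real) \<Rightarrow> bool" where
  "cadlag_paths M X \<longleftrightarrow>
     (\<forall>\<omega>\<in>space M. \<forall>t\<ge>0.
        continuous (at_right t) (\<lambda>s. X s \<omega>) \<and>
        (0 < t \<longrightarrow> (\<exists>l. ((\<lambda>s. X s \<omega>) \<longlongrightarrow> l) (at_left t))))"

definition supermartingale :: "'a measure \<Rightarrow> (real \<Rightarrow> 'a measure) \<Rightarrow> (real \<Rightarrow> 'a \<Rightarrow> real) \<Rightarrow> bool" where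
  "supermartingale M F X \<longleftrightarrow>
     adapted F X \<and> (\<forall>t\<ge>0. integrable M (X t)) \<and>
     (\<forall>s t. 0 \<le> s \<longrightarrow> s \<le> t \<longrightarrow>
        (AE \<omega> in M. real_cond_exp M (F s) (X t) \<omega> \<le> X s \<omega>))"

definition pricing_kernel :: "'a measure \<Rightarrow> (real \<Rightarrow> 'a measure) \<Rightarrow> (real \<Rightarrow> 'a \<Rightarrow> real) \<Rightarrow> bool" where
  "pricing_kernel M F \<pi> \<longleftrightarrow>
     adapted F \<pi> \<and> cadlag_paths M \<pi> \<and>
     (\<forall>t\<ge>0. AE \<omega> in M. \<pi> t \<omega> > 0) \<and>
     (\<forall>t\<ge>0. integrable M (\<pi> t)) \<and>
     Liminf at_top (\<lambda>t. ereal (integral\<^sup>L M (\<pi> t))) = 0"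
  (* the semimartingale property is not formalised *)

definition asymptotically_tail_pareto ::
    "'a measure \<Rightarrow> (real \<Rightarrow> 'a \<Rightarrow> real) \<Rightarrow> real \<Rightarrow> bool" where
  "asymptotically_tail_pareto M \<pi> lam \<longleftrightarrow>
     (AE \<omega> in M. Liminf at_top (\<lambda>t. ereal (t powr lam * \<pi> t \<omega>)) > 0) \<and>
     Liminf at_top (\<lambda>t. ereal (integral\<^sup>L M (\<lambda>\<omega>. t powr lam * \<pi> t \<omega>))) < \<infinity>"

definition bond_price :: "'a measure \<Rightarrow> (real \<Rightarrow> 'a measure) \<Rightarrow> (real \<Rightarrow> 'a \<Rightarrow> real)
    \<Rightarrow> real \<Rightarrow> real \<Rightarrow> 'a \<Rightarrow> real" where
  "bond_price M F \<pi> t T \<omega> = real_cond_exp M (F t) (\<pi> T) \<omega> / \<pi> t \<omega>"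

text \<open>Tail-Pareto rate, the solution L of P = (1 + (T-t) L / \<lambda>) powr (-\<lambda>) (for P > 0, T > t).\<close>
definition tail_pareto_rate :: "'a measure \<Rightarrow> (real \<Rightarrow> 'a measure) \<Rightarrow> (real \<Rightarrow> 'a \<Rightarrow> real)
    \<Rightarrow> real \<Rightarrow> real \<Rightarrow> real \<Rightarrow> 'a \<Rightarrow> real" where
  "tail_pareto_rate M F \<pi> lam t T \<omega> =
     lam / (T - t) * (bond_price M F \<pi> t T \<omega> powr (- 1 / lam) - 1)"

definition is_ess_sup_fam :: "'a measure \<Rightarrow> 'a measure \<Rightarrow> 'i set \<Rightarrow> ('i \<Rightarrow> 'a \<Rightarrow> ereal)
    \<Rightarrow> ('a \<Rightarrow> ereal) \<Rightarrow> bool" where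
  "is_ess_sup_fam M N I f g \<longleftrightarrow>
     g \<in> borel_measurable N \<and>
     (\<forall>i\<in>I. AE \<omega> in M. f i \<omega> \<le> g \<omega>) \<and>
     (\<forall>h\<in>borel_measurable N. (\<forall>i\<in>I. AE \<omega> in M. f i \<omega> \<le> h \<omega>) \<longrightarrow> (AE \<omega> in M. g \<omega> \<le> h \<omega>))"

definition is_ess_inf_fam :: "'a measure \<Rightarrow> 'a measure \<Rightarrow> 'i set \<Rightarrow> ('i \<Rightarrow> 'a \<Rightarrow> ereal)
    \<Rightarrow> ('a \<Rightarrow> ereal) \<Rightarrow> bool" where
  "is_ess_inf_fam M N I f g \<longleftrightarrow>
     g \<in> borel_measurable N \<and>
     (\<forall>i\<in>I. AE \<omega> in M. g \<omega> \<le> f i \<omega>) \<and>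
     (\<forall>h\<in>borel_measurable N. (\<forall>i\<in>I. AE \<omega> in M. h \<omega> \<le> f i \<omega>) \<longrightarrow> (AE \<omega> in M. h \<omega> \<le> g \<omega>))"

definition ess_sup_fam :: "'a measure \<Rightarrow> 'a measure \<Rightarrow> 'i set \<Rightarrow> ('i \<Rightarrow> 'a \<Rightarrow> ereal) \<Rightarrow> 'a \<Rightarrow> ereal" where
  "ess_sup_fam M N I f = (SOME g. is_ess_sup_fam M N I f g)"

definition ess_inf_fam :: "'a measure \<Rightarrow> 'a measure \<Rightarrow> 'i set \<Rightarrow> ('i \<Rightarrow> 'a \<Rightarrow> ereal) \<Rightarrow> 'a \<Rightarrow> ereal" where
  "ess_inf_fam M N I f = (SOME g. is_ess_inf_fam M N I f g)"

definition ess_limsup_top :: "'a measure \<Rightarrow> 'a measure \<Rightarrow> real set \<Rightarrow> (real \<Rightarrow> 'a \<Rightarrow> ereal) \<Rightarrow> 'a \<Rightarrow> ereal" where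
  "ess_limsup_top M N D f = ess_inf_fam M N (UNIV :: real set) (\<lambda>x. ess_sup_fam M N {T\<in>D. x \<le> T} f)"

definition long_tail_pareto_rate :: "'a measure \<Rightarrow> (real \<Rightarrow> 'a measure) \<Rightarrow> (real \<Rightarrow> 'a \<Rightarrow> real)
    \<Rightarrow> real \<Rightarrow> real \<Rightarrow> 'a \<Rightarrow> ereal" where
  "long_tail_pareto_rate M F \<pi> lam t =
     ess_limsup_top M (F t) {t<..} (\<lambda>T \<omega>. ereal (tail_pareto_rate M F \<pi> lam t T \<omega>))"

end

theory Submission imports Defs begin

definition phi :: "ereal \<Rightarrow> real" where
  "phi x = arctan (real_of_ereal x) + (if x = \<infinity> then pi/2 else if x = -\<infinity> then -pi/2 else 0)"

lemma phi_ereal[simp]: "phi (ereal r) = arctan r" by (simp add: phi_def)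

lemma phi_strict: "x < y \<Longrightarrow> phi x < phi y"
  using arctan_bounded
  by (cases x; cases y) (auto simp: phi_def arctan_less_iff)

lemma phi_meas[measurable]: "phi \<in> borel_measurable borel"
  unfolding phi_def by measurable

lemma phi_mono: "x \<le> y \<Longrightarrow> phi x \<le> phi y"
  by (metis order.order_iff_strict phi_strict less_imp_le)

lemma phi_bound: "\<bar>phi x\<bar> \<le> pi/2"
proof (cases x)
  case (real r) then show ?thesis using arctan_bounded[of r] by (simp add: abs_le_iff del: mult.commute) linarith
qed (simp_all add: phi_def)

lemma phi_le: "phi x \<le> pi/2"
  using phi_bound[of x] by (simp add: abs_le_iff)

lemma phi_inj: "phi x = phi y \<Longrightarrow> x = y"
  by (metis linorder_neqE phi_strict less_irrefl)

lemma small_nonpos: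
  fixes x :: real
  assumes "\<And>n::nat. x \<le> 1 / (real n + 1)"
  shows "x \<le> 0"
proof (rule ccontr)
  assume "\<not> x \<le> 0"
  then obtain n where "inverse (real (Suc n)) < x" using reals_Archimedean[of x] by auto
  with assms[of n] show False by (simp add: field_simps)
qed
lemma ess_sup_exists:
  fixes f :: "'i \<Rightarrow> 'a \<Rightarrow> ereal"
  assumes P: "prob_space M" and sub: "subalgebra M N"
    and fm: "\<And>i. i \<in> I \<Longrightarrow> f i \<in> borel_measurable N"
  shows "\<exists>J. countable J \<and> J \<subseteq> I \<and> is_ess_sup_fam M N I f (\<lambda>\<omega>. SUP j\<in>J. f j \<omega>)"
proof -
  interpret prob_space M by (rule P)
  define s where "s J = (\<lambda>\<omega>. SUP j\<in>J. f j \<omega>)" for J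
  have sN: "s J \<in> borel_measurable N" if "countable J" "J \<subseteq> I" for J
    unfolding s_def using that fm by (intro borel_measurable_SUP) auto
  have sM: "s J \<in> borel_measurable M" if "countable J" "J \<subseteq> I" for J
    using measurable_from_subalg[OF sub sN[OF that]] .
  have intg: "integrable M (\<lambda>\<omega>. phi (s J \<omega>))" if "countable J" "J \<subseteq> I" for J
    by (rule integrable_const_bound[where B="pi/2"]) (use sM[OF that] phi_bound in auto)
  define V where "V J = (\<integral>\<omega>. phi (s J \<omega>) \<partial>M)" for J
  have Vb: "V J \<le> pi/2" if "countable J" "J \<subseteq> I" for J
  proof -
    have "V J \<le> (\<integral>\<omega>. pi/2 \<partial>M)"
      unfolding V_def using intg[OF that] phi_le
      by (intro integral_mono) auto
    then show ?thesis by (simp add: prob_space)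
  qed
  have Vmono: "V J \<le> V J'" if "countable J'" "J \<subseteq> J'" "J' \<subseteq> I" for J J'
  proof -
    have cJ: "countable J" using that countable_subset by blast
    show ?thesis unfolding V_def
      using that cJ by (intro integral_mono intg phi_mono) (auto simp: s_def intro: SUP_subset_mono)
  qed
  define C where "C = {J. countable J \<and> J \<subseteq> I}"
  define \<alpha> where "\<alpha> = Sup (V ` C)"
  have Cne: "{} \<in> C" by (simp add: C_def)
  have bdd: "bdd_above (V ` C)" using Vb unfolding C_def bdd_above_def by (intro exI[where x="pi/2"]) auto
  have up: "V J \<le> \<alpha>" if "J \<in> C" for J unfolding \<alpha>_def using bdd that by (intro cSup_upper) auto
  have "\<exists>J\<in>C. \<alpha> - 1/(real n + 1) < V J" for n :: nat
  proof -
    have "\<alpha> - 1/(real n + 1) < Sup (V ` C)" unfolding \<alpha>_def by simp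
    then show ?thesis using Cne bdd by (subst (asm) less_cSup_iff) auto
  qed
  then obtain Jn where Jn: "\<And>n. Jn n \<in> C" "\<And>n. \<alpha> - 1/(real n + 1) < V (Jn n)" by metis
  define J where "J = (\<Union>n. Jn n)"
  have JC: "J \<in> C" using Jn(1) by (auto simp: C_def J_def)
  have cJ: "countable J" and JI: "J \<subseteq> I" using JC by (auto simp: C_def)
  have VJ: "\<alpha> - 1/(real n + 1) < V J" for n
    using Jn(2)[of n] Vmono[OF cJ _ JI, of "Jn n"] by (force simp: J_def)
  show ?thesis
  proof (intro exI conjI)
    show "countable J" "J \<subseteq> I" by fact+
    show "is_ess_sup_fam M N I f (\<lambda>\<omega>. SUP j\<in>J. f j \<omega>)"
      unfolding is_ess_sup_fam_def
    proof (intro conjI ballI impI)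
      show "(\<lambda>\<omega>. SUP j\<in>J. f j \<omega>) \<in> borel_measurable N" using sN[OF cJ JI] by (simp add: s_def)
    next
      fix i assume i: "i \<in> I"
      define J' where "J' = insert i J"
      have cJ': "countable J'" "J' \<subseteq> I" using cJ JI i by (auto simp: J'_def)
      have "V J' \<le> \<alpha>" using up cJ' by (auto simp: C_def)
      have le: "V J' - V J \<le> 0"
      proof (rule small_nonpos)
        fix n show "V J' - V J \<le> 1 / (real n + 1)" using VJ[of n] \<open>V J' \<le> \<alpha>\<close> by linarith
      qed
      have ge: "\<And>\<omega>. phi (s J \<omega>) \<le> phi (s J' \<omega>)"
        by (intro phi_mono) (auto simp: s_def J'_def intro: SUP_subset_mono)
      have "(\<integral>\<omega>. phi (s J' \<omega>) - phi (s J \<omega>) \<partial>M) = V J' - V J"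
        unfolding V_def using intg[OF cJ'] intg[OF cJ JI] by simp
      also have "\<dots> \<le> 0" by (rule le)
      finally have "(\<integral>\<omega>. phi (s J' \<omega>) - phi (s J \<omega>) \<partial>M) = 0"
        using ge by (intro antisym integral_nonneg) auto
      then have "AE \<omega> in M. phi (s J' \<omega>) - phi (s J \<omega>) = 0"
        using intg[OF cJ'] intg[OF cJ JI] ge
        by (subst (asm) integral_nonneg_eq_0_iff_AE) auto
      then have "AE \<omega> in M. s J' \<omega> = s J \<omega>"
        by eventually_elim (auto intro: phi_inj)
      then show "AE \<omega> in M. f i \<omega> \<le> (SUP j\<in>J. f j \<omega>)"
        by eventually_elim (simp add: s_def J'_def max.absorb_iff2[symmetric])
    next
      fix h :: "'a \<Rightarrow> ereal"
      assume "h \<in> borel_measurable N" and H: "\<forall>i\<in>I. AE \<omega> in M. f i \<omega> \<le> h \<omega>"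
      then have "\<forall>j\<in>J. AE \<omega> in M. f j \<omega> \<le> h \<omega>" using JI by auto
      then have "AE \<omega> in M. \<forall>j\<in>J. f j \<omega> \<le> h \<omega>" using cJ by (subst AE_ball_countable) auto
      then show "AE \<omega> in M. (SUP j\<in>J. f j \<omega>) \<le> h \<omega>"
        by eventually_elim (auto intro: SUP_least)
    qed
  qed
qed


lemma ess_inf_exists:
  fixes f :: "'i \<Rightarrow> 'a \<Rightarrow> ereal"
  assumes P: "prob_space M" and sub: "subalgebra M N"
    and fm: "\<And>i. i \<in> I \<Longrightarrow> f i \<in> borel_measurable N"
  shows "\<exists>J. countable J \<and> J \<subseteq> I \<and> is_ess_inf_fam M N I f (\<lambda>\<omega>. INF j\<in>J. f j \<omega>)"
proof -
  obtain J where J: "countable J" "J \<subseteq> I"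
    and S: "is_ess_sup_fam M N I (\<lambda>i \<omega>. - f i \<omega>) (\<lambda>\<omega>. SUP j\<in>J. - f j \<omega>)"
    using ess_sup_exists[OF P sub, of I "\<lambda>i \<omega>. - f i \<omega>"] fm by auto
  have eq: "(SUP j\<in>J. - f j \<omega>) = - (INF j\<in>J. f j \<omega>)" for \<omega>
    by (rule ereal_SUP_uminus_eq)
  show ?thesis
  proof (intro exI conjI)
    show "countable J" "J \<subseteq> I" by fact+
    show "is_ess_inf_fam M N I f (\<lambda>\<omega>. INF j\<in>J. f j \<omega>)"
      unfolding is_ess_inf_fam_def
    proof (intro conjI ballI impI)
      show "(\<lambda>\<omega>. INF j\<in>J. f j \<omega>) \<in> borel_measurable N"
        using S unfolding is_ess_sup_fam_def eq by simp
    next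
      fix i assume "i \<in> I"
      then have "AE \<omega> in M. - f i \<omega> \<le> - (INF j\<in>J. f j \<omega>)"
        using S unfolding is_ess_sup_fam_def eq by auto
      then show "AE \<omega> in M. (INF j\<in>J. f j \<omega>) \<le> f i \<omega>"
        by eventually_elim (simp add: ereal_uminus_le_reorder)
    next
      fix h :: "'a \<Rightarrow> ereal"
      assume hm: "h \<in> borel_measurable N" and H: "\<forall>i\<in>I. AE \<omega> in M. h \<omega> \<le> f i \<omega>"
      have H': "\<forall>i\<in>I. AE \<omega> in M. - f i \<omega> \<le> - h \<omega>"
        using H by (auto elim!: eventually_mono)
      have hm': "(\<lambda>\<omega>. - h \<omega>) \<in> borel_measurable N" using hm by simp
      have ALL: "\<forall>h\<in>borel_measurable N. (\<forall>i\<in>I. AE \<omega> in M. - f i \<omega> \<le> h \<omega>) \<longrightarrow>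
          (AE \<omega> in M. - (INF j\<in>J. f j \<omega>) \<le> h \<omega>)"
        using S unfolding is_ess_sup_fam_def eq by blast
      have "AE \<omega> in M. - (INF j\<in>J. f j \<omega>) \<le> - h \<omega>"
        by (rule ALL[rule_format, OF hm']) (use H' in auto)
      then show "AE \<omega> in M. h \<omega> \<le> (INF j\<in>J. f j \<omega>)"
        by eventually_elim simp
    qed
  qed
qed

lemma ess_sup_fam_is:
  fixes f :: "'i \<Rightarrow> 'a \<Rightarrow> ereal"
  assumes "prob_space M" "subalgebra M N" "\<And>i. i \<in> I \<Longrightarrow> f i \<in> borel_measurable N"
  shows "is_ess_sup_fam M N I f (ess_sup_fam M N I f)"
  proof -
  obtain J where "is_ess_sup_fam M N I f (\<lambda>\<omega>. SUP j\<in>J. f j \<omega>)"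
    using ess_sup_exists[of M N I f] assms by blast
  then show ?thesis unfolding ess_sup_fam_def by (rule someI[where P="is_ess_sup_fam M N I f"])
qed

lemma ess_inf_fam_is:
  fixes f :: "'i \<Rightarrow> 'a \<Rightarrow> ereal"
  assumes "prob_space M" "subalgebra M N" "\<And>i. i \<in> I \<Longrightarrow> f i \<in> borel_measurable N"
  shows "is_ess_inf_fam M N I f (ess_inf_fam M N I f)"
  proof -
  obtain J where "is_ess_inf_fam M N I f (\<lambda>\<omega>. INF j\<in>J. f j \<omega>)"
    using ess_inf_exists[of M N I f] assms by blast
  then show ?thesis unfolding ess_inf_fam_def by (rule someI[where P="is_ess_inf_fam M N I f"])
qed


lemma Liminf_lessE:
  fixes g :: "real \<Rightarrow> ereal"
  assumes "Liminf at_top g < ereal B"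
  shows "\<exists>T\<ge>x. g T < ereal B"
proof -
  have "(INF T\<in>{T. x \<le> T}. g T) \<le> Liminf at_top g"
    unfolding Liminf_def by (rule SUP_upper) (auto simp: eventually_ge_at_top)
  then have "(INF T\<in>{T. x \<le> T}. g T) < ereal B" using assms by simp
  then show ?thesis by (auto simp: INF_less_iff)
qed

lemma Liminf_finite_bound:
  fixes g :: "real \<Rightarrow> ereal"
  assumes "Liminf at_top g < \<infinity>"
  shows "\<exists>B. \<forall>x. \<exists>T\<ge>x. g T < ereal B"
proof -
  have "\<exists>B. Liminf at_top g < ereal B"
  proof (cases "Liminf at_top g")
    case (real r) then show ?thesis by (intro exI[of _ "r + 1"]) simp
  next
    case MInf then show ?thesis by (intro exI[of _ 0]) simp
  qed (use assms in simp)
  then obtain B where "Liminf at_top g < ereal B" by blast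
  then show ?thesis using Liminf_lessE by blast
qed

lemma Liminf_posE:
  fixes g :: "real \<Rightarrow> ereal"
  assumes "0 < Liminf at_top g"
  shows "\<exists>x. 0 < (INF T\<in>{T. x \<le> T}. g T)"
proof -
  from assms obtain P where P: "eventually P at_top" and lt: "0 < (INF T\<in>Collect P. g T)"
    unfolding Liminf_def by (auto simp: less_SUP_iff)
  from P obtain x where x: "\<And>T. x \<le> T \<Longrightarrow> P T" by (auto simp: eventually_at_top_linorder)
  have "(INF T\<in>Collect P. g T) \<le> (INF T\<in>{T. x \<le> T}. g T)"
    using x by (intro INF_superset_mono) auto
  with lt show ?thesis by (intro exI[of _ x]) auto
qed



lemma powr_inv_le1:
  fixes a b l :: real
  assumes "0 < l" "0 \<le> a" "0 \<le> b"
  shows "a powr (1/l) \<le> b \<longleftrightarrow> a \<le> b powr l"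
proof
  assume "a powr (1/l) \<le> b"
  then have "(a powr (1/l)) powr l \<le> b powr l" using assms by (intro powr_mono2) auto
  then show "a \<le> b powr l" using assms by (simp add: powr_powr)
next
  assume "a \<le> b powr l"
  then have "a powr (1/l) \<le> (b powr l) powr (1/l)" using assms by (intro powr_mono2) auto
  then show "a powr (1/l) \<le> b" using assms by (simp add: powr_powr)
qed

lemma powr_inv_le2:
  fixes a b l :: real
  assumes "0 < l" "0 \<le> a" "0 \<le> b"
  shows "b \<le> a powr (1/l) \<longleftrightarrow> b powr l \<le> a"
proof
  assume "b \<le> a powr (1/l)"
  then have "b powr l \<le> (a powr (1/l)) powr l" using assms by (intro powr_mono2) auto
  then show "b powr l \<le> a" using assms by (simp add: powr_powr)
next
  assume "b powr l \<le> a"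
  then have "(b powr l) powr (1/l) \<le> a powr (1/l)" using assms by (intro powr_mono2) auto
  then show "b \<le> a powr (1/l)" using assms by (simp add: powr_powr)
qed

lemma inv1:
  fixes l p v s :: real
  assumes "0 < l" "0 < p" "0 < v" "0 < s"
  shows "l * (p / v) powr (1/l) \<le> s \<longleftrightarrow> p * (l / s) powr l \<le> v"
proof -
  have "l * (p / v) powr (1/l) \<le> s \<longleftrightarrow> (p / v) powr (1/l) \<le> s / l"
    using assms by (simp add: field_simps)
  also have "\<dots> \<longleftrightarrow> p / v \<le> (s / l) powr l"
    using assms by (intro powr_inv_le1) auto
  also have "\<dots> \<longleftrightarrow> p \<le> v * (s / l) powr l"
    using assms by (simp add: field_simps)
  also have "\<dots> \<longleftrightarrow> p * (l / s) powr l \<le> v"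
    using assms by (simp add: powr_divide field_simps)
  finally show ?thesis .
qed

lemma inv2:
  fixes l p v s :: real
  assumes "0 < l" "0 < p" "0 < v" "0 < s"
  shows "s \<le> l * (p / v) powr (1/l) \<longleftrightarrow> v \<le> p * (l / s) powr l"
proof -
  have "s \<le> l * (p / v) powr (1/l) \<longleftrightarrow> s / l \<le> (p / v) powr (1/l)"
    using assms by (simp add: field_simps)
  also have "\<dots> \<longleftrightarrow> (s / l) powr l \<le> p / v"
    using assms by (intro powr_inv_le2) auto
  also have "\<dots> \<longleftrightarrow> v * (s / l) powr l \<le> p"
    using assms by (simp add: field_simps)
  also have "\<dots> \<longleftrightarrow> v \<le> p * (l / s) powr l"
    using assms by (simp add: powr_divide field_simps)
  finally show ?thesis .
qed

lemma rate_eq: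
  fixes l p q d :: real
  assumes "0 < l" "0 < p" "0 < q" "0 < d"
  shows "l / d * ((q / p) powr (- 1 / l) - 1) = l * (p / (d powr l * q)) powr (1/l) - l / d"
proof -
  have "(q / p) powr (- 1 / l) = (p / q) powr (1 / l)"
    using assms by (simp add: powr_divide powr_minus_divide divide_simps)
  moreover have "(p / (d powr l * q)) powr (1/l) = (p / q) powr (1/l) / d"
    using assms by (simp add: powr_divide powr_mult powr_powr)
  ultimately show ?thesis using assms by (simp add: field_simps)
qed


definition EPhi :: "real \<Rightarrow> real \<Rightarrow> ereal \<Rightarrow> ereal" where
  "EPhi l p v = (if v \<le> 0 then \<infinity> else if v = \<infinity> then 0 else ereal (l * (p / real_of_ereal v) powr (1/l)))"

definition EPsi :: "real \<Rightarrow> real \<Rightarrow> ereal \<Rightarrow> ereal" where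
  "EPsi l p s = (if s \<le> 0 then \<infinity> else if s = \<infinity> then 0 else ereal (p * (l / real_of_ereal s) powr l))"

lemma EPhi_real: "0 < v \<Longrightarrow> EPhi l p (ereal v) = ereal (l * (p / v) powr (1/l))"
  by (simp add: EPhi_def)

lemma EPsi_nonneg: "0 < p \<Longrightarrow> 0 \<le> EPsi l p s"
  by (simp add: EPsi_def)

lemma galois1:
  assumes "0 < l" "0 < p"
  shows "s \<le> EPhi l p v \<longleftrightarrow> v \<le> EPsi l p s"
proof (cases "v \<le> 0")
  case True
  then show ?thesis using EPsi_nonneg[OF assms(2), of l s] by (auto simp: EPhi_def intro: order.trans)
next
  case vpos: False
  show ?thesis
  proof (cases "v = \<infinity>")
    case True
    then show ?thesis using vpos assms by (auto simp: EPhi_def EPsi_def)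
  next
    case False
    with vpos obtain w where w: "v = ereal w" "0 < w" by (cases v) auto
    show ?thesis
    proof (cases "s \<le> 0")
      case True then show ?thesis using w assms by (auto simp: EPhi_def EPsi_def intro: order.trans)
    next
      case spos: False
      show ?thesis
      proof (cases "s = \<infinity>")
        case True then show ?thesis using w assms by (auto simp: EPhi_def EPsi_def)
      next
        case False
        with spos obtain r where r: "s = ereal r" "0 < r" by (cases s) auto
        show ?thesis using w r assms inv2[OF assms(1,2) w(2) r(2)] by (simp add: EPhi_def EPsi_def)
      qed
    qed
  qed
qed

lemma galois2:
  assumes "0 < l" "0 < p" "0 < w"
  shows "EPhi l p (ereal w) \<le> s \<longleftrightarrow> EPsi l p s \<le> ereal w"
proof (cases "s \<le> 0")
  case True
  moreover have "0 < EPhi l p (ereal w)" using assms by (simp add: EPhi_def)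
  ultimately show ?thesis using assms by (auto simp: EPsi_def)
next
  case spos: False
  show ?thesis
  proof (cases "s = \<infinity>")
    case True then show ?thesis using assms by (auto simp: EPhi_def EPsi_def)
  next
    case False
    with spos obtain r where r: "s = ereal r" "0 < r" by (cases s) auto
    show ?thesis using r assms inv1[OF assms(1,2,3) r(2)] by (simp add: EPhi_def EPsi_def)
  qed
qed

lemma EPhi_antimono:
  assumes "0 < l" "0 < p" "v1 \<le> v2"
  shows "EPhi l p v2 \<le> EPhi l p v1"
proof -
  have "v2 \<le> EPsi l p (EPhi l p v2)" using galois1[OF assms(1,2)] by blast
  with assms(3) have "v1 \<le> EPsi l p (EPhi l p v2)" by (rule order.trans)
  then show ?thesis using galois1[OF assms(1,2)] by blast
qed

lemma EPhi_meas[measurable]: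
  "(\<lambda>x. EPhi l (f x) (g x)) \<in> borel_measurable M"
  if [measurable]: "f \<in> borel_measurable M" "g \<in> borel_measurable M"
  unfolding EPhi_def by measurable

lemma EPsi_meas[measurable]:
  "(\<lambda>x. EPsi l (f x) (g x)) \<in> borel_measurable M"
  if [measurable]: "f \<in> borel_measurable M" "g \<in> borel_measurable M"
  unfolding EPsi_def by measurable

lemma ereal_le_eps_nat:
  fixes a b :: ereal
  assumes "\<And>k::nat. a \<le> b + ereal (1 / (real k + 1))"
  shows "a \<le> b"
proof (rule ereal_le_epsilon2)
  fix e :: real assume "0 < e"
  then obtain k where "inverse (real (Suc k)) < e" using reals_Archimedean by blast
  then have "ereal (1 / (real k + 1)) \<le> ereal e" by (simp add: field_simps)
  then have "b + ereal (1 / (real k + 1)) \<le> b + ereal e" by (rule add_left_mono)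
  with assms[of k] show "a \<le> b + ereal e" by (rule order.trans)
qed


locale pk_setting =
  fixes M :: "'a measure" and F :: "real \<Rightarrow> 'a measure"
    and \<pi> :: "real \<Rightarrow> 'a \<Rightarrow> real" and lam :: real
  assumes prob: "prob_space M" and filt: "filtration_on M F"
    and pk: "pricing_kernel M F \<pi>" and lam: "lam > 0"
    and atp: "asymptotically_tail_pareto M \<pi> lam"
begin

interpretation P: prob_space M by (rule prob)

lemma sub: "t \<ge> 0 \<Longrightarrow> subalgebra M (F t)"
  using filt by (simp add: filtration_on_def)

lemma subsub: "0 \<le> s \<Longrightarrow> s \<le> t \<Longrightarrow> subalgebra (F t) (F s)"
  using filt sub[of s] sub[of t] by (simp add: filtration_on_def subalgebra_def)

lemma sfs: "t \<ge> 0 \<Longrightarrow> sigma_finite_subalgebra M (F t)"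
  by (rule finite_measure_subalgebra_is_sigma_finite)
     (simp add: finite_measure_subalgebra_def finite_measure_subalgebra_axioms_def sub P.finite_measure_axioms)

lemma pi_F: "T \<ge> 0 \<Longrightarrow> \<pi> T \<in> borel_measurable (F T)"
  using pk by (simp add: pricing_kernel_def adapted_def)

lemma pi_M[measurable]: "T \<ge> 0 \<Longrightarrow> \<pi> T \<in> borel_measurable M"
  using measurable_from_subalg[OF sub pi_F] .

lemma pi_int: "T \<ge> 0 \<Longrightarrow> integrable M (\<pi> T)"
  using pk by (simp add: pricing_kernel_def)

lemma pi_pos: "T \<ge> 0 \<Longrightarrow> AE \<omega> in M. \<pi> T \<omega> > 0"
  using pk by (simp add: pricing_kernel_def)

definition c :: "real \<Rightarrow> real \<Rightarrow> 'a \<Rightarrow> real" where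
  "c t T = real_cond_exp M (F t) (\<pi> T)"
definition K :: "real \<Rightarrow> real \<Rightarrow> 'a \<Rightarrow> ereal" where
  "K t T \<omega> = ereal ((T - t) powr lam * c t T \<omega>)"
definition Ix :: "real \<Rightarrow> real \<Rightarrow> real set" where
  "Ix t x = {T\<in>{t<..}. x \<le> T}"
definition Z :: "real \<Rightarrow> real \<Rightarrow> 'a \<Rightarrow> ereal" where
  "Z t x = ess_inf_fam M (F t) (Ix t x) (K t)"
definition Th :: "real \<Rightarrow> 'a \<Rightarrow> ereal" where
  "Th t = ess_sup_fam M (F t) UNIV (Z t)"
definition th :: "real \<Rightarrow> 'a \<Rightarrow> real" where
  "th t \<omega> = real_of_ereal (Th t \<omega>)"

lemma c_N[measurable]: "c t T \<in> borel_measurable (F t)"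
  by (simp add: c_def)
lemma c_M[measurable]: "c t T \<in> borel_measurable M"
  by (simp add: c_def)

lemma c_pos: "0 \<le> t \<Longrightarrow> 0 \<le> T \<Longrightarrow> AE \<omega> in M. c t T \<omega> > 0"
proof -
  assume "0 \<le> t" "0 \<le> T"
  interpret S: sigma_finite_subalgebra M "F t" by (rule sfs) fact
  show ?thesis unfolding c_def
    by (rule S.real_cond_exp_gr_c) (use pi_int pi_pos \<open>0 \<le> T\<close> in auto)
qed

lemma c_int: "0 \<le> t \<Longrightarrow> 0 \<le> T \<Longrightarrow> integrable M (c t T)"
proof -
  assume "0 \<le> t" "0 \<le> T"
  interpret S: sigma_finite_subalgebra M "F t" by (rule sfs) fact
  show ?thesis unfolding c_def using S.real_cond_exp_int(1) pi_int \<open>0 \<le> T\<close> by auto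
qed

lemma c_integral: "0 \<le> t \<Longrightarrow> 0 \<le> T \<Longrightarrow> (\<integral>\<omega>. c t T \<omega> \<partial>M) = (\<integral>\<omega>. \<pi> T \<omega> \<partial>M)"
proof -
  assume "0 \<le> t" "0 \<le> T"
  interpret S: sigma_finite_subalgebra M "F t" by (rule sfs) fact
  show ?thesis unfolding c_def using S.real_cond_exp_int(2) pi_int \<open>0 \<le> T\<close> by auto
qed

lemma K_N[measurable]: "K t T \<in> borel_measurable (F t)"
  unfolding K_def by measurable

lemma K_nonneg: 
  assumes "0 \<le> t" "0 \<le> T" shows "AE \<omega> in M. 0 \<le> K t T \<omega>"
  using c_pos[OF assms] by eventually_elim (auto simp: K_def)

context fixes t :: real assumes t: "0 \<le> t"
begin

lemma Z_is: "is_ess_inf_fam M (F t) (Ix t x) (K t) (Z t x)"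
  unfolding Z_def by (rule ess_inf_fam_is[OF prob sub[OF t]]) simp

lemma Z_N[measurable]: "Z t x \<in> borel_measurable (F t)"
  using Z_is by (simp add: is_ess_inf_fam_def)

lemma Z_M[measurable]: "Z t x \<in> borel_measurable M"
  using measurable_from_subalg[OF sub[OF t] Z_N] .

lemma Z_le: "T \<in> Ix t x \<Longrightarrow> AE \<omega> in M. Z t x \<omega> \<le> K t T \<omega>"
  using Z_is by (simp add: is_ess_inf_fam_def)

lemma Z_max: "h \<in> borel_measurable (F t) \<Longrightarrow> (\<And>T. T \<in> Ix t x \<Longrightarrow> AE \<omega> in M. h \<omega> \<le> K t T \<omega>)
   \<Longrightarrow> AE \<omega> in M. h \<omega> \<le> Z t x \<omega>"
  using Z_is by (simp add: is_ess_inf_fam_def)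

lemma Z_nonneg: "AE \<omega> in M. 0 \<le> Z t x \<omega>"
  by (rule Z_max) (use K_nonneg t in \<open>auto simp: Ix_def\<close>)

lemma Z_mono: "x \<le> y \<Longrightarrow> AE \<omega> in M. Z t x \<omega> \<le> Z t y \<omega>"
  by (rule Z_max) (auto intro: Z_le simp: Ix_def)

lemma Th_is: "is_ess_sup_fam M (F t) UNIV (Z t) (Th t)"
  unfolding Th_def by (rule ess_sup_fam_is[OF prob sub[OF t]]) simp

lemma Th_N[measurable]: "Th t \<in> borel_measurable (F t)"
  using Th_is by (simp add: is_ess_sup_fam_def)

lemma Th_M[measurable]: "Th t \<in> borel_measurable M"
  using measurable_from_subalg[OF sub[OF t] Th_N] .

lemma Th_ge: "AE \<omega> in M. Z t x \<omega> \<le> Th t \<omega>"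
  using Th_is by (simp add: is_ess_sup_fam_def)

lemma Th_min: "h \<in> borel_measurable (F t) \<Longrightarrow> (\<And>x. AE \<omega> in M. Z t x \<omega> \<le> h \<omega>)
   \<Longrightarrow> AE \<omega> in M. Th t \<omega> \<le> h \<omega>"
  using Th_is by (simp add: is_ess_sup_fam_def)

lemma Th_SUP: "AE \<omega> in M. Th t \<omega> = (SUP n. Z t (real n) \<omega>)"
proof -
  have le1: "AE \<omega> in M. Th t \<omega> \<le> (SUP n. Z t (real n) \<omega>)"
  proof (rule Th_min)
    fix x
    obtain n :: nat where "x \<le> real n" using real_arch_simple by blast
    from Z_mono[OF this] show "AE \<omega> in M. Z t x \<omega> \<le> (SUP n. Z t (real n) \<omega>)"
      by eventually_elim (auto intro: SUP_upper2)
  qed measurable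
  have "AE \<omega> in M. \<forall>n. Z t (real n) \<omega> \<le> Th t \<omega>"
    using Th_ge by (simp add: AE_all_countable)
  then have le2: "AE \<omega> in M. (SUP n. Z t (real n) \<omega>) \<le> Th t \<omega>"
    by eventually_elim (auto intro: SUP_least)
  from le1 le2 show ?thesis by eventually_elim auto
qed

lemma Z_inc: "AE \<omega> in M. incseq (\<lambda>n. Z t (real n) \<omega>)"
proof -
  have "AE \<omega> in M. \<forall>n. Z t (real n) \<omega> \<le> Z t (real (Suc n)) \<omega>"
    using Z_mono by (simp add: AE_all_countable)
  then show ?thesis by eventually_elim (rule incseq_SucI, auto)
qed


lemma bound: "\<exists>B. \<forall>x. \<exists>T\<ge>x. (\<integral>\<omega>. T powr lam * \<pi> T \<omega> \<partial>M) < B"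
proof -
  have "Liminf at_top (\<lambda>T. ereal (\<integral>\<omega>. T powr lam * \<pi> T \<omega> \<partial>M)) < \<infinity>"
    using atp by (simp add: asymptotically_tail_pareto_def)
  from Liminf_finite_bound[OF this] show ?thesis by auto
qed

lemma Z_nn_bound:
  assumes B: "\<forall>x. \<exists>T\<ge>x. (\<integral>\<omega>. T powr lam * \<pi> T \<omega> \<partial>M) < B"
  shows "(\<integral>\<^sup>+\<omega>. e2ennreal (Z t x \<omega>) \<partial>M) \<le> ennreal B"
proof -
  obtain T where T: "max x (t + 1) \<le> T" "(\<integral>\<omega>. T powr lam * \<pi> T \<omega> \<partial>M) < B"
    using B by blast
  have T0: "0 \<le> T" "t < T" using T t by auto
  have TI: "T \<in> Ix t x" using T by (auto simp: Ix_def)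
  have "AE \<omega> in M. e2ennreal (Z t x \<omega>) \<le> ennreal ((T - t) powr lam * c t T \<omega>)"
    using Z_le[OF TI] by eventually_elim (drule e2ennreal_mono, simp add: K_def)
  then have "(\<integral>\<^sup>+\<omega>. e2ennreal (Z t x \<omega>) \<partial>M) \<le> (\<integral>\<^sup>+\<omega>. ennreal ((T - t) powr lam * c t T \<omega>) \<partial>M)"
    by (rule nn_integral_mono_AE)
  also have "\<dots> = ennreal (\<integral>\<omega>. (T - t) powr lam * c t T \<omega> \<partial>M)"
    using c_int[OF t T0(1)] c_pos[OF t T0(1)]
    by (intro nn_integral_eq_integral) (auto elim!: eventually_mono)
  also have "(\<integral>\<omega>. (T - t) powr lam * c t T \<omega> \<partial>M) = (T - t) powr lam * (\<integral>\<omega>. \<pi> T \<omega> \<partial>M)"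
    using c_integral[OF t T0(1)] by simp
  also have "\<dots> \<le> T powr lam * (\<integral>\<omega>. \<pi> T \<omega> \<partial>M)"
  proof (rule mult_right_mono)
    show "(T - t) powr lam \<le> T powr lam" using T0 t lam by (intro powr_mono2) auto
    show "0 \<le> (\<integral>\<omega>. \<pi> T \<omega> \<partial>M)"
      using pi_pos[OF T0(1)] by (intro integral_nonneg_AE) (auto elim!: eventually_mono)
  qed
  also have "\<dots> = (\<integral>\<omega>. T powr lam * \<pi> T \<omega> \<partial>M)" by simp
  finally show ?thesis using T(2) by (simp add: ennreal_leI order.trans)
qed

lemma e2ennreal_top_iff: "e2ennreal x = top \<longleftrightarrow> x = \<infinity>"
  by (cases x) (auto simp: e2ennreal_neg)

lemma Th_nn_bound:
  assumes B: "\<forall>x. \<exists>T\<ge>x. (\<integral>\<omega>. T powr lam * \<pi> T \<omega> \<partial>M) < B"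
  shows "(\<integral>\<^sup>+\<omega>. e2ennreal (Th t \<omega>) \<partial>M) \<le> ennreal B"
proof -
  have "AE \<omega> in M. e2ennreal (Th t \<omega>) = (SUP n. e2ennreal (Z t (real n) \<omega>))"
    using Th_SUP Z_inc
  proof eventually_elim
    case (elim \<omega>)
    then show ?case
      using sup_continuousD[OF sup_continuous_e2ennreal[OF sup_continuous_id], of "\<lambda>n. Z t (real n) \<omega>"]
      by (simp add: mono_iff_le_Suc incseq_Suc_iff)
  qed
  then have "(\<integral>\<^sup>+\<omega>. e2ennreal (Th t \<omega>) \<partial>M) = (\<integral>\<^sup>+\<omega>. (SUP n. e2ennreal (Z t (real n) \<omega>)) \<partial>M)"
    by (rule nn_integral_cong_AE)
  also have "\<dots> = (SUP n. \<integral>\<^sup>+\<omega>. e2ennreal (Z t (real n) \<omega>) \<partial>M)"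
  proof (rule nn_integral_monotone_convergence_SUP_AE)
    fix n
    show "AE \<omega> in M. e2ennreal (Z t (real n) \<omega>) \<le> e2ennreal (Z t (real (Suc n)) \<omega>)"
      using Z_mono[of "real n" "real (Suc n)", OF of_nat_mono[OF le_SucI[OF order_refl]]]
      by eventually_elim (auto intro: e2ennreal_mono)
  qed measurable
  also have "\<dots> \<le> ennreal B" using Z_nn_bound[OF B] by (intro SUP_least) auto
  finally show ?thesis .
qed

lemma Th_fin: "AE \<omega> in M. Th t \<omega> < \<infinity>"
proof -
  obtain B where B: "\<forall>x. \<exists>T\<ge>x. (\<integral>\<omega>. T powr lam * \<pi> T \<omega> \<partial>M) < B" using bound by blast
  have "(\<integral>\<^sup>+\<omega>. e2ennreal (Th t \<omega>) \<partial>M) \<noteq> \<infinity>"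
    using Th_nn_bound[OF B] by (auto simp: top_unique)
  then have "AE \<omega> in M. e2ennreal (Th t \<omega>) \<noteq> \<infinity>"
    by (intro nn_integral_PInf_AE) measurable
  then show ?thesis by eventually_elim (auto simp: e2ennreal_top_iff less_le)
qed

lemma Th_nonneg: "AE \<omega> in M. 0 \<le> Th t \<omega>"
  using Z_nonneg[of 0] Th_ge[of 0] by eventually_elim auto

lemma th_eq: "AE \<omega> in M. Th t \<omega> = ereal (th t \<omega>)"
  using Th_fin Th_nonneg by eventually_elim (auto simp: th_def ereal_real)

lemma th_N[measurable]: "th t \<in> borel_measurable (F t)"
  unfolding th_def by measurable

lemma th_M[measurable]: "th t \<in> borel_measurable M"
  unfolding th_def by measurable

lemma th_int: "integrable M (th t)"
proof (rule integrableI_nonneg)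
  obtain B where B: "\<forall>x. \<exists>T\<ge>x. (\<integral>\<omega>. T powr lam * \<pi> T \<omega> \<partial>M) < B" using bound by blast
  show "AE \<omega> in M. 0 \<le> th t \<omega>" using Th_nonneg by eventually_elim (simp add: th_def real_of_ereal_pos)
  have "AE \<omega> in M. ennreal (th t \<omega>) = e2ennreal (Th t \<omega>)"
    using th_eq by eventually_elim simp
  then have "(\<integral>\<^sup>+\<omega>. ennreal (th t \<omega>) \<partial>M) = (\<integral>\<^sup>+\<omega>. e2ennreal (Th t \<omega>) \<partial>M)"
    by (rule nn_integral_cong_AE)
  also have "\<dots> \<le> ennreal B" by (rule Th_nn_bound[OF B])
  finally show "(\<integral>\<^sup>+\<omega>. ennreal (th t \<omega>) \<partial>M) < \<infinity>" by (simp add: le_less_trans)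
qed measurable


lemma k_bound:
  assumes "0 < a" "a \<le> T" "t < a"
  shows "((a - t) / a) powr lam * T powr lam \<le> (T - t) powr lam"
proof -
  have "(a - t) / a * T \<le> T - t"
  proof -
    have "(a - t) * T \<le> (T - t) * a" using assms t by (simp add: algebra_simps mult_right_mono)
    then show ?thesis using assms by (simp add: field_simps)
  qed
  moreover have "0 \<le> (a - t) / a * T" using assms by auto
  ultimately have "((a - t) / a * T) powr lam \<le> (T - t) powr lam"
    using lam by (intro powr_mono2) auto
  then show ?thesis by (simp only: powr_mult)
qed

lemma Th_pos: "AE \<omega> in M. 0 < Th t \<omega>"
proof -
  define a where "a n = max (real n) (t + 1)" for n :: nat
  have a: "0 < a n" "t < a n" "real n \<le> a n" for n using t by (auto simp: a_def)
  define G where "G T \<omega> = ereal (T powr lam * \<pi> T \<omega>)" for T \<omega>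
  define D where "D n = {T. a n \<le> T}" for n
  have subM: "subalgebra M M" by (simp add: subalgebra_def)
  have GM: "T \<in> D n \<Longrightarrow> G T \<in> borel_measurable M" for T n
    using a[of n] unfolding G_def D_def by (intro borel_measurable_ereal borel_measurable_times) auto
  have "\<exists>J. countable J \<and> J \<subseteq> D n \<and> is_ess_inf_fam M M (D n) G (\<lambda>\<omega>. INF j\<in>J. G j \<omega>)" for n
    by (rule ess_inf_exists[OF prob subM]) (rule GM)
  then obtain J where J: "\<And>n. countable (J n)" "\<And>n. J n \<subseteq> D n"
    "\<And>n. is_ess_inf_fam M M (D n) G (\<lambda>\<omega>. INF j\<in>J n. G j \<omega>)" by metis
  define y where "y n \<omega> = (INF j\<in>J n. G j \<omega>)" for n \<omega>
  have yfun: "y n = (\<lambda>\<omega>. INF j\<in>J n. G j \<omega>)" for n by (simp add: y_def fun_eq_iff)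
  have yM[measurable]: "y n \<in> borel_measurable M" for n
    using J(3)[of n] by (simp add: is_ess_inf_fam_def yfun)
  have y_le: "T \<in> D n \<Longrightarrow> AE \<omega> in M. y n \<omega> \<le> G T \<omega>" for n T
    using J(3)[of n] by (simp add: is_ess_inf_fam_def y_def)
  have G_nonneg: "T \<in> D n \<Longrightarrow> AE \<omega> in M. 0 \<le> G T \<omega>" for n T
    using pi_pos[of T] a[of n] unfolding D_def G_def by (auto elim!: eventually_mono)
  have y_nonneg: "AE \<omega> in M. 0 \<le> y n \<omega>" for n
  proof -
    have "\<forall>j\<in>J n. AE \<omega> in M. 0 \<le> G j \<omega>" using J(2) G_nonneg by blast
    then have "AE \<omega> in M. \<forall>j\<in>J n. 0 \<le> G j \<omega>" using J(1) by (subst AE_ball_countable) auto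
    then show ?thesis by eventually_elim (auto simp: y_def intro: INF_greatest)
  qed
  have "AE \<omega> in M. 0 < Liminf at_top (\<lambda>T. ereal (T powr lam * \<pi> T \<omega>))"
    using atp by (simp add: asymptotically_tail_pareto_def)
  then have ypos: "AE \<omega> in M. \<exists>n. 0 < y n \<omega>"
  proof eventually_elim
    case (elim \<omega>)
    from Liminf_posE[OF elim] obtain x where x: "0 < (INF T\<in>{T. x \<le> T}. G T \<omega>)"
      by (auto simp: G_def)
    obtain n :: nat where n: "x \<le> real n" using real_arch_simple by blast
    have "(INF T\<in>{T. x \<le> T}. G T \<omega>) \<le> y n \<omega>"
      unfolding y_def
    proof (rule INF_greatest)
      fix j assume "j \<in> J n"
      then have "x \<le> j" using J(2)[of n] n a[of n] by (auto simp: D_def)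
      then show "(INF T\<in>{T. x \<le> T}. G T \<omega>) \<le> G j \<omega>" by (intro INF_lower) auto
    qed
    with x show ?case by (auto intro: less_le_trans)
  qed
  have yzero: "AE \<omega> in M. Th t \<omega> \<le> 0 \<longrightarrow> y n \<omega> \<le> 0" for n
  proof -
    interpret S: sigma_finite_subalgebra M "F t" by (rule sfs[OF t])
    have aD: "a n \<in> D n" by (simp add: D_def)
    define yr where "yr \<omega> = real_of_ereal (y n \<omega>)" for \<omega>
    have yr_eq: "AE \<omega> in M. y n \<omega> = ereal (yr \<omega>)"
      using y_le[OF aD] y_nonneg[of n] by eventually_elim (auto simp: yr_def G_def ereal_real)
    have yrM[measurable]: "yr \<in> borel_measurable M" unfolding yr_def by measurable
    have yr_nonneg: "AE \<omega> in M. 0 \<le> yr \<omega>"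
      using y_nonneg[of n] by eventually_elim (simp add: yr_def real_of_ereal_pos)
    have yr_le: "AE \<omega> in M. yr \<omega> \<le> T powr lam * \<pi> T \<omega>" if "T \<in> D n" for T
      using y_le[OF that] yr_eq by eventually_elim (auto simp: G_def)
    have intT: "0 \<le> T \<Longrightarrow> integrable M (\<lambda>\<omega>. T powr lam * \<pi> T \<omega>)" for T
      using pi_int[of T] by simp
    have yr_int: "integrable M yr"
    proof (rule Bochner_Integration.integrable_bound[OF intT[OF less_imp_le[OF a(1)]]])
      show "AE \<omega> in M. norm (yr \<omega>) \<le> norm (a n powr lam * \<pi> (a n) \<omega>)"
        using yr_le[OF aD] yr_nonneg by eventually_elim auto
    qed (use a[of n] in auto)
    define e where "e = real_cond_exp M (F t) yr"
    define k where "k = ((a n - t) / a n) powr lam"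
    have k: "0 < k" using a[of n] t by (simp add: k_def)
    have "AE \<omega> in M. ereal (k * e \<omega>) \<le> Z t (a n) \<omega>"
    proof (rule Z_max)
      show "(\<lambda>\<omega>. ereal (k * e \<omega>)) \<in> borel_measurable (F t)" unfolding e_def by measurable
    next
      fix T assume TI: "T \<in> Ix t (a n)"
      then have TD: "T \<in> D n" and T0: "0 \<le> T" using a[of n] t by (auto simp: Ix_def D_def)
      have "AE \<omega> in M. e \<omega> \<le> real_cond_exp M (F t) (\<lambda>\<omega>. T powr lam * \<pi> T \<omega>) \<omega>"
        unfolding e_def by (rule S.real_cond_exp_mono[OF yr_le[OF TD] yr_int intT[OF T0]])
      moreover have "AE \<omega> in M. real_cond_exp M (F t) (\<lambda>\<omega>. T powr lam * \<pi> T \<omega>) \<omega> = T powr lam * c t T \<omega>"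
        unfolding c_def by (rule S.real_cond_exp_cmult) (rule pi_int[OF T0])
      moreover have "AE \<omega> in M. 0 < c t T \<omega>" by (rule c_pos[OF t T0])
      ultimately show "AE \<omega> in M. ereal (k * e \<omega>) \<le> K t T \<omega>"
      proof eventually_elim
        case (elim \<omega>)
        have kb: "k * T powr lam \<le> (T - t) powr lam"
          unfolding k_def using k_bound[OF a(1) _ a(2)] TD by (auto simp: D_def)
        have "k * e \<omega> \<le> k * (T powr lam * c t T \<omega>)" using elim k by auto
        also have "\<dots> = (k * T powr lam) * c t T \<omega>" by simp
        also have "\<dots> \<le> (T - t) powr lam * c t T \<omega>" using kb elim by (intro mult_right_mono) auto
        finally show ?case by (simp add: K_def)
      qed
    qed
    with Th_ge[of "a n"] have ke: "AE \<omega> in M. Th t \<omega> \<le> 0 \<longrightarrow> e \<omega> \<le> 0"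
    proof eventually_elim
      case (elim \<omega>)
      show ?case
      proof
        assume "Th t \<omega> \<le> 0"
        then have "ereal (k * e \<omega>) \<le> 0" using elim by (meson order.trans)
        then have "k * e \<omega> \<le> 0" by simp
        then show "e \<omega> \<le> 0" using k by (simp add: mult_le_0_iff)
      qed
    qed
    define A where "A = {\<omega>\<in>space M. Th t \<omega> \<le> 0}"
    have AF: "A \<in> sets (F t)"
    proof -
      have "space (F t) = space M" using sub[OF t] by (simp add: subalgebra_def)
      moreover have "{\<omega>\<in>space (F t). Th t \<omega> \<le> 0} \<in> sets (F t)" by measurable
      ultimately show ?thesis unfolding A_def by simp
    qed
    have AM: "A \<in> sets M" using AF sub[OF t] by (auto simp: subalgebra_def)
    have indF[measurable]: "indicator A \<in> borel_measurable (F t)" using AF by simp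
    have "(\<integral>\<omega>. indicator A \<omega> * e \<omega> \<partial>M) = (\<integral>\<omega>. indicator A \<omega> * yr \<omega> \<partial>M)"
      unfolding e_def
      by (rule S.real_cond_exp_intg(2)) (use integrable_real_mult_indicator[OF AM yr_int] in \<open>auto simp: mult.commute\<close>)
    moreover have "(\<integral>\<omega>. indicator A \<omega> * e \<omega> \<partial>M) \<le> 0"
    proof -
      have "0 \<le> (\<integral>\<omega>. - (indicator A \<omega> * e \<omega>) \<partial>M)"
        using ke by (intro integral_nonneg_AE) (auto simp: A_def indicator_def elim!: eventually_mono)
      then show ?thesis by simp
    qed
    moreover have "0 \<le> (\<integral>\<omega>. indicator A \<omega> * yr \<omega> \<partial>M)"
      using yr_nonneg by (intro integral_nonneg_AE) (auto elim!: eventually_mono)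
    ultimately have "(\<integral>\<omega>. indicator A \<omega> * yr \<omega> \<partial>M) = 0" by linarith
    then have "AE \<omega> in M. indicator A \<omega> * yr \<omega> = 0"
      using integrable_real_mult_indicator[OF AM yr_int] yr_nonneg
      by (subst (asm) integral_nonneg_eq_0_iff_AE) (auto simp: mult.commute elim!: eventually_mono)
    then show ?thesis using yr_eq AE_space
      by eventually_elim (auto simp: A_def indicator_def split: if_splits)
  qed
  have "AE \<omega> in M. \<forall>n. Th t \<omega> \<le> 0 \<longrightarrow> y n \<omega> \<le> 0" unfolding AE_all_countable using yzero by blast
  with ypos show ?thesis by eventually_elim (auto simp: not_le[symmetric])
qed


lemma pi_Ft[measurable]: "\<pi> t \<in> borel_measurable (F t)" using pi_F[OF t] .

lemma c_pos': "t < T \<Longrightarrow> AE \<omega> in M. c t T \<omega> > 0"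
  using c_pos[OF t, of T] t by simp

definition LF :: "real \<Rightarrow> 'a \<Rightarrow> ereal" where
  "LF T \<omega> = ereal (tail_pareto_rate M F \<pi> lam t T \<omega>)"

lemma LF_N[measurable]: "LF T \<in> borel_measurable (F t)"
  unfolding LF_def tail_pareto_rate_def bond_price_def by measurable

lemma LF_eq:
  assumes T: "t < T"
  shows "AE \<omega> in M. LF T \<omega> + ereal (lam / (T - t)) = EPhi lam (\<pi> t \<omega>) (K t T \<omega>)"
  using c_pos'[OF T] pi_pos[OF t] 
proof eventually_elim
  case (elim \<omega>)
  have d: "0 < T - t" using T by simp
  have "0 < (T - t) powr lam * c t T \<omega>" using elim d by simp
  then show ?case
    using rate_eq[OF lam elim(2) elim(1) d]
    by (simp add: LF_def tail_pareto_rate_def bond_price_def K_def EPhi_def c_def)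
qed

definition S :: "real \<Rightarrow> 'a \<Rightarrow> ereal" where
  "S x = ess_sup_fam M (F t) (Ix t x) LF"

lemma S_is: "is_ess_sup_fam M (F t) (Ix t x) LF (S x)"
  unfolding S_def by (rule ess_sup_fam_is[OF prob sub[OF t]]) simp

lemma S_N[measurable]: "S x \<in> borel_measurable (F t)"
  using S_is by (simp add: is_ess_sup_fam_def)

lemma S_ge: "T \<in> Ix t x \<Longrightarrow> AE \<omega> in M. LF T \<omega> \<le> S x \<omega>"
  using S_is by (simp add: is_ess_sup_fam_def)

lemma S_min: "h \<in> borel_measurable (F t) \<Longrightarrow> (\<And>T. T \<in> Ix t x \<Longrightarrow> AE \<omega> in M. LF T \<omega> \<le> h \<omega>)
   \<Longrightarrow> AE \<omega> in M. S x \<omega> \<le> h \<omega>"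
  using S_is by (simp add: is_ess_sup_fam_def)

lemma S_anti: "x \<le> y \<Longrightarrow> AE \<omega> in M. S y \<omega> \<le> S x \<omega>"
  by (rule S_min) (auto intro: S_ge simp: Ix_def)

lemma LF_le_EPhi:
  assumes T: "t < T"
  shows "AE \<omega> in M. LF T \<omega> \<le> EPhi lam (\<pi> t \<omega>) (K t T \<omega>)"
  using LF_eq[OF T]
proof eventually_elim
  case (elim \<omega>)
  have "LF T \<omega> \<le> LF T \<omega> + ereal (lam / (T - t))"
    using T lam by (intro ereal_le_add_self) auto
  then show ?case using elim by simp
qed

lemma S_le_EPhi: "AE \<omega> in M. S x \<omega> \<le> EPhi lam (\<pi> t \<omega>) (Z t x \<omega>)"
proof (rule S_min)
  fix T assume TI: "T \<in> Ix t x"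
  then have T: "t < T" by (simp add: Ix_def)
  show "AE \<omega> in M. LF T \<omega> \<le> EPhi lam (\<pi> t \<omega>) (Z t x \<omega>)"
    using LF_le_EPhi[OF T] Z_le[OF TI] pi_pos[OF t]
  proof eventually_elim
    case (elim \<omega>)
    show ?case using order.trans[OF elim(1) EPhi_antimono[OF lam elim(3) elim(2)]] .
  qed
qed measurable

definition g :: "'a \<Rightarrow> ereal" where
  "g \<omega> = ereal (lam * (\<pi> t \<omega> / th t \<omega>) powr (1 / lam))"

lemma g_N[measurable]: "g \<in> borel_measurable (F t)"
  unfolding g_def by measurable

lemma th_pos: "AE \<omega> in M. 0 < th t \<omega>"
  using Th_pos th_eq by eventually_elim simp

lemma g_eq: "AE \<omega> in M. g \<omega> = EPhi lam (\<pi> t \<omega>) (Th t \<omega>)"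
  using th_eq th_pos by eventually_elim (simp add: g_def EPhi_def)

lemma g_le_S: "AE \<omega> in M. g \<omega> \<le> S x \<omega>"
proof -
  have "AE \<omega> in M. g \<omega> \<le> S x \<omega> + ereal (1 / (real k + 1))" for k :: nat
  proof -
    define y where "y = max x (t + lam * (real k + 1))"
    define \<delta> where "\<delta> = ereal (1 / (real k + 1))"
    have "0 < lam * (real k + 1)" using lam by simp
    then have y: "x \<le> y" "t < y" by (auto simp: y_def less_max_iff_disj)
    have "AE \<omega> in M. EPsi lam (\<pi> t \<omega>) (S y \<omega> + \<delta>) \<le> Z t y \<omega>"
    proof (rule Z_max)
      show "(\<lambda>\<omega>. EPsi lam (\<pi> t \<omega>) (S y \<omega> + \<delta>)) \<in> borel_measurable (F t)"
        unfolding \<delta>_def by measurable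
    next
      fix T assume TI: "T \<in> Ix t y"
      then have T: "t < T" "y \<le> T" by (auto simp: Ix_def)
      have dl: "lam / (T - t) \<le> 1 / (real k + 1)"
      proof -
        have "lam * (real k + 1) \<le> T - t" using T by (auto simp: y_def)
        then show ?thesis using lam T by (simp add: field_simps)
      qed
      show "AE \<omega> in M. EPsi lam (\<pi> t \<omega>) (S y \<omega> + \<delta>) \<le> K t T \<omega>"
        using LF_eq[OF T(1)] S_ge[OF TI] c_pos'[OF T(1)] pi_pos[OF t]
      proof eventually_elim
        case (elim \<omega>)
        have "EPhi lam (\<pi> t \<omega>) (K t T \<omega>) \<le> S y \<omega> + \<delta>"
        proof -
          have "EPhi lam (\<pi> t \<omega>) (K t T \<omega>) = LF T \<omega> + ereal (lam / (T - t))" using elim(1) by simp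
          also have "\<dots> \<le> S y \<omega> + \<delta>" unfolding \<delta>_def using elim(2) dl by (intro add_mono) auto
          finally show ?thesis .
        qed
        moreover have "0 < (T - t) powr lam * c t T \<omega>" using elim T by simp
        ultimately show ?case
          using galois2[OF lam elim(4), of "(T - t) powr lam * c t T \<omega>"] by (simp add: K_def)
      qed
    qed
    then show ?thesis
      using Th_ge[of y] th_eq th_pos pi_pos[OF t] g_eq S_anti[OF y(1)]
    proof eventually_elim
      case (elim \<omega>)
      have "EPsi lam (\<pi> t \<omega>) (S y \<omega> + \<delta>) \<le> ereal (th t \<omega>)" using elim by (metis order.trans)
      then have "EPhi lam (\<pi> t \<omega>) (ereal (th t \<omega>)) \<le> S y \<omega> + \<delta>"
        using galois2[OF lam elim(5) elim(4)] by simp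
      then have "g \<omega> \<le> S y \<omega> + \<delta>" using elim by simp
      also have "\<dots> \<le> S x \<omega> + \<delta>" using elim by (intro add_right_mono) auto
      finally show ?case by (simp add: \<delta>_def)
    qed
  qed
  then have "AE \<omega> in M. \<forall>k::nat. g \<omega> \<le> S x \<omega> + ereal (1 / (real k + 1))"
    by (simp add: AE_all_countable)
  then show ?thesis by eventually_elim (rule ereal_le_eps_nat, auto)
qed

lemma g_max:
  assumes hN[measurable]: "h \<in> borel_measurable (F t)" and H: "\<And>x. AE \<omega> in M. h \<omega> \<le> S x \<omega>"
  shows "AE \<omega> in M. h \<omega> \<le> g \<omega>"
proof -
  have "AE \<omega> in M. Th t \<omega> \<le> EPsi lam (\<pi> t \<omega>) (h \<omega>)"
  proof (rule Th_min)
    fix x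
    show "AE \<omega> in M. Z t x \<omega> \<le> EPsi lam (\<pi> t \<omega>) (h \<omega>)"
      using H[of x] S_le_EPhi[of x] pi_pos[OF t]
    proof eventually_elim
      case (elim \<omega>)
      then have "h \<omega> \<le> EPhi lam (\<pi> t \<omega>) (Z t x \<omega>)" by (metis order.trans)
      then show ?case using galois1[OF lam elim(3)] by blast
    qed
  qed measurable
  then show ?thesis using pi_pos[OF t] g_eq
  proof eventually_elim
    case (elim \<omega>)
    then show ?case using galois1[OF lam elim(2)] by simp
  qed
qed

lemma LT_eq: "AE \<omega> in M. long_tail_pareto_rate M F \<pi> lam t \<omega> = g \<omega>"
proof -
  have LTdef: "long_tail_pareto_rate M F \<pi> lam t = ess_inf_fam M (F t) UNIV S"
    unfolding long_tail_pareto_rate_def ess_limsup_top_def S_def Ix_def LF_def[abs_def] by simp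
  have LTis: "is_ess_inf_fam M (F t) UNIV S (ess_inf_fam M (F t) UNIV S)"
    by (rule ess_inf_fam_is[OF prob sub[OF t]]) simp
  have N[measurable]: "ess_inf_fam M (F t) UNIV S \<in> borel_measurable (F t)"
    using LTis by (simp add: is_ess_inf_fam_def)
  have le1: "AE \<omega> in M. ess_inf_fam M (F t) UNIV S \<omega> \<le> g \<omega>"
    by (rule g_max) (use LTis in \<open>auto simp: is_ess_inf_fam_def\<close>)
  have le2: "AE \<omega> in M. g \<omega> \<le> ess_inf_fam M (F t) UNIV S \<omega>"
    using LTis g_le_S by (simp add: is_ess_inf_fam_def)
  from le1 le2 show ?thesis unfolding LTdef by eventually_elim auto
qed

lemma LT_prop: "AE \<omega> in M. 0 < long_tail_pareto_rate M F \<pi> lam t \<omega> \<and>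
              long_tail_pareto_rate M F \<pi> lam t \<omega> < \<infinity> \<and>
              long_tail_pareto_rate M F \<pi> lam t \<omega> = ereal (lam * (\<pi> t \<omega> / th t \<omega>) powr (1 / lam))"
  using LT_eq th_pos pi_pos[OF t]
  by eventually_elim (use lam in \<open>auto simp: g_def\<close>)

end

definition zr :: "real \<Rightarrow> nat \<Rightarrow> 'a \<Rightarrow> real" where
  "zr t n \<omega> = real_of_ereal (Z t (real n) \<omega>)"

lemma zr_N[measurable]: "0 \<le> t \<Longrightarrow> zr t n \<in> borel_measurable (F t)"
  unfolding zr_def by (rule borel_measurable_real_of_ereal[OF Z_N])

lemma zr_M[measurable]: "0 \<le> t \<Longrightarrow> zr t n \<in> borel_measurable M"
  unfolding zr_def by (rule borel_measurable_real_of_ereal[OF Z_M])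

lemma zr_eq:
  assumes t: "0 \<le> t" shows "AE \<omega> in M. Z t (real n) \<omega> = ereal (zr t n \<omega>) \<and> 0 \<le> zr t n \<omega> \<and> zr t n \<omega> \<le> th t \<omega>"
  using Z_nonneg[OF t, of "real n"] Th_ge[OF t, of "real n"] th_eq[OF t]
proof eventually_elim
  case (elim \<omega>) then show ?case by (cases "Z t (real n) \<omega>") (auto simp: zr_def)
qed

lemma zr_int:
  assumes t: "0 \<le> t" shows "integrable M (zr t n)"
proof (rule Bochner_Integration.integrable_bound[OF th_int[OF t]])
  show "AE \<omega> in M. norm (zr t n \<omega>) \<le> norm (th t \<omega>)"
    using zr_eq[OF t, of n] by eventually_elim auto
qed (rule zr_M[OF t])

lemma zr_conv:
  assumes t: "0 \<le> t" shows "AE \<omega> in M. (\<lambda>n. zr t n \<omega>) \<longlonglongrightarrow> th t \<omega>"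
  using Th_SUP[OF t] Z_inc[OF t] th_eq[OF t]
proof eventually_elim
  case (elim \<omega>)
  have "(\<lambda>n. Z t (real n) \<omega>) \<longlonglongrightarrow> ereal (th t \<omega>)"
    using LIMSEQ_SUP[OF elim(2)] elim(1,3) by simp
  then show ?case unfolding zr_def by (rule lim_real_of_ereal)
qed

lemma step:
  assumes s: "0 \<le> s" "s \<le> t" and n: "t < real n"
  shows "AE \<omega> in M. real_cond_exp M (F s) (zr t n) \<omega> \<le> th s \<omega>"
proof -
  have t: "0 \<le> t" using s by simp
  interpret S: sigma_finite_subalgebra M "F s" by (rule sfs[OF s(1)])
  have "AE \<omega> in M. ereal (real_cond_exp M (F s) (zr t n) \<omega>) \<le> Z s (real n) \<omega>"
  proof (rule Z_max[OF s(1)])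
    show "(\<lambda>\<omega>. ereal (real_cond_exp M (F s) (zr t n) \<omega>)) \<in> borel_measurable (F s)" by measurable
  next
    fix T assume TI: "T \<in> Ix s (real n)"
    then have T: "t < T" "real n \<le> T" using n by (auto simp: Ix_def)
    then have TIt: "T \<in> Ix t (real n)" by (simp add: Ix_def)
    have T0: "0 \<le> T" using T t by simp
    have cint: "integrable M (\<lambda>\<omega>. (T - t) powr lam * c t T \<omega>)" using c_int[OF t T0] by simp
    have "AE \<omega> in M. zr t n \<omega> \<le> (T - t) powr lam * c t T \<omega>"
      using Z_le[OF t TIt] zr_eq[OF t, of n] by eventually_elim (auto simp: K_def)
    then have "AE \<omega> in M. real_cond_exp M (F s) (zr t n) \<omega> \<le>
                 real_cond_exp M (F s) (\<lambda>\<omega>. (T - t) powr lam * c t T \<omega>) \<omega>"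
      by (rule S.real_cond_exp_mono[OF _ zr_int[OF t] cint])
    moreover have "AE \<omega> in M. real_cond_exp M (F s) (\<lambda>\<omega>. (T - t) powr lam * c t T \<omega>) \<omega> =
                 (T - t) powr lam * real_cond_exp M (F s) (c t T) \<omega>"
      by (rule S.real_cond_exp_cmult[OF c_int[OF t T0]])
    moreover have "AE \<omega> in M. real_cond_exp M (F s) (c t T) \<omega> = c s T \<omega>"
      unfolding c_def by (rule S.real_cond_exp_nested_subalg[OF sub[OF t] subsub[OF s] pi_int[OF T0]])
    moreover have "AE \<omega> in M. 0 < c s T \<omega>" by (rule c_pos[OF s(1) T0])
    ultimately show "AE \<omega> in M. ereal (real_cond_exp M (F s) (zr t n) \<omega>) \<le> K s T \<omega>"
    proof eventually_elim
      case (elim \<omega>)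
      have "(T - t) powr lam \<le> (T - s) powr lam" using s T lam by (intro powr_mono2) auto
      then have "(T - t) powr lam * c s T \<omega> \<le> (T - s) powr lam * c s T \<omega>"
        using elim(4) by (intro mult_right_mono) auto
      then show ?case using elim(1-3) by (simp add: K_def)
    qed
  qed
  then show ?thesis using Th_ge[OF s(1), of "real n"] th_eq[OF s(1)]
    by eventually_elim (metis order.trans ereal_less_eq(3))
qed

lemma supermart:
  assumes s: "0 \<le> s" "s \<le> t"
  shows "AE \<omega> in M. real_cond_exp M (F s) (th t) \<omega> \<le> th s \<omega>"
proof -
  have t: "0 \<le> t" using s by simp
  interpret S: sigma_finite_subalgebra M "F s" by (rule sfs[OF s(1)])
  define E where "E = real_cond_exp M (F s) (th t)"
  have E_int: "integrable M E" unfolding E_def by (rule S.real_cond_exp_int(1)[OF th_int[OF t]])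
  define B where "B = {\<omega>\<in>space M. th s \<omega> < E \<omega>}"
  have BF: "B \<in> sets (F s)"
  proof -
    have "space (F s) = space M" using sub[OF s(1)] by (simp add: subalgebra_def)
    moreover have "{\<omega>\<in>space (F s). th s \<omega> < E \<omega>} \<in> sets (F s)"
      unfolding E_def using th_N[OF s(1)] by measurable
    ultimately show ?thesis unfolding B_def by simp
  qed
  have BM: "B \<in> sets M" using BF sub[OF s(1)] by (auto simp: subalgebra_def)
  have [measurable]: "indicator B \<in> borel_measurable (F s)" using BF by simp
  have int_th: "integrable M (\<lambda>\<omega>. th t \<omega> * indicator B \<omega>)"
    by (rule integrable_real_mult_indicator[OF BM th_int[OF t]])
  have eq1: "(\<integral>\<omega>. indicator B \<omega> * E \<omega> \<partial>M) = (\<integral>\<omega>. indicator B \<omega> * th t \<omega> \<partial>M)"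
    unfolding E_def by (rule S.real_cond_exp_intg(2)) (use int_th th_M[OF t] in \<open>auto simp: mult.commute\<close>)
  obtain N :: nat where N: "t < real N" using reals_Archimedean2 by blast
  have lim: "(\<lambda>n. \<integral>\<omega>. indicator B \<omega> * zr t n \<omega> \<partial>M) \<longlonglongrightarrow> (\<integral>\<omega>. indicator B \<omega> * th t \<omega> \<partial>M)"
  proof (rule integral_dominated_convergence[where w="th t"])
    show "AE \<omega> in M. (\<lambda>n. indicator B \<omega> * zr t n \<omega>) \<longlonglongrightarrow> indicator B \<omega> * th t \<omega>"
      using zr_conv[OF t] by eventually_elim (rule tendsto_mult_left)
    fix n show "AE \<omega> in M. norm (indicator B \<omega> * zr t n \<omega>) \<le> th t \<omega>"
      using zr_eq[OF t, of n] by eventually_elim (auto simp: indicator_def)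
  qed (use th_int[OF t] th_M[OF t] t BM in auto)
  have bnd: "(\<integral>\<omega>. indicator B \<omega> * zr t n \<omega> \<partial>M) \<le> (\<integral>\<omega>. indicator B \<omega> * th s \<omega> \<partial>M)"
    if n: "N \<le> n" for n
  proof -
    have tn: "t < real n" using N n by linarith
    have "(\<integral>\<omega>. indicator B \<omega> * zr t n \<omega> \<partial>M) = (\<integral>\<omega>. indicator B \<omega> * real_cond_exp M (F s) (zr t n) \<omega> \<partial>M)"
      by (rule S.real_cond_exp_intg(2)[symmetric])
         (use integrable_real_mult_indicator[OF BM zr_int[OF t, of n]] t in \<open>auto simp: mult.commute\<close>)
    also have "\<dots> \<le> (\<integral>\<omega>. indicator B \<omega> * th s \<omega> \<partial>M)"
    proof (rule integral_mono_AE)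
      show "integrable M (\<lambda>\<omega>. indicator B \<omega> * real_cond_exp M (F s) (zr t n) \<omega>)"
        using integrable_real_mult_indicator[OF BM S.real_cond_exp_int(1)[OF zr_int[OF t, of n]]]
        by (simp add: mult.commute)
      show "integrable M (\<lambda>\<omega>. indicator B \<omega> * th s \<omega>)"
        using integrable_real_mult_indicator[OF BM th_int[OF s(1)]] by (simp add: mult.commute)
      show "AE \<omega> in M. indicator B \<omega> * real_cond_exp M (F s) (zr t n) \<omega> \<le> indicator B \<omega> * th s \<omega>"
        using step[OF s tn] by eventually_elim (auto simp: indicator_def)
    qed
    finally show ?thesis .
  qed
  have le: "(\<integral>\<omega>. indicator B \<omega> * th t \<omega> \<partial>M) \<le> (\<integral>\<omega>. indicator B \<omega> * th s \<omega> \<partial>M)"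
    using LIMSEQ_le_const2[OF lim] bnd by blast
  have intE: "integrable M (\<lambda>\<omega>. indicator B \<omega> * E \<omega>)"
    using integrable_real_mult_indicator[OF BM E_int] by (simp add: mult.commute)
  have ints: "integrable M (\<lambda>\<omega>. indicator B \<omega> * th s \<omega>)"
    using integrable_real_mult_indicator[OF BM th_int[OF s(1)]] by (simp add: mult.commute)
  have "(\<integral>\<omega>. indicator B \<omega> * (E \<omega> - th s \<omega>) \<partial>M) =
        (\<integral>\<omega>. indicator B \<omega> * E \<omega> \<partial>M) - (\<integral>\<omega>. indicator B \<omega> * th s \<omega> \<partial>M)"
    using intE ints by (simp add: right_diff_distrib)
  also have "\<dots> \<le> 0" using eq1 le by simp
  finally have i0: "(\<integral>\<omega>. indicator B \<omega> * (E \<omega> - th s \<omega>) \<partial>M) \<le> 0" .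
  have nn: "\<And>\<omega>. 0 \<le> indicator B \<omega> * (E \<omega> - th s \<omega>)" by (auto simp: indicator_def B_def)
  have intd: "integrable M (\<lambda>\<omega>. indicator B \<omega> * (E \<omega> - th s \<omega>))"
    using intE ints by (simp add: right_diff_distrib)
  have "(\<integral>\<omega>. indicator B \<omega> * (E \<omega> - th s \<omega>) \<partial>M) = 0"
    using i0 nn by (intro antisym integral_nonneg) auto
  then have "AE \<omega> in M. indicator B \<omega> * (E \<omega> - th s \<omega>) = 0"
    using intd nn by (subst (asm) integral_nonneg_eq_0_iff_AE) auto
  then show ?thesis unfolding E_def[symmetric] using AE_space
    by eventually_elim (auto simp: B_def indicator_def split: if_splits)
qed

lemma main:
  "\<exists>\<theta>. supermartingale M F \<theta> \<and> (\<forall>t\<ge>0. AE \<omega> in M. \<theta> t \<omega> > 0) \<and>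
           (\<forall>t\<ge>0. AE \<omega> in M.
              0 < long_tail_pareto_rate M F \<pi> lam t \<omega> \<and>
              long_tail_pareto_rate M F \<pi> lam t \<omega> < \<infinity> \<and>
              long_tail_pareto_rate M F \<pi> lam t \<omega> = ereal (lam * (\<pi> t \<omega> / \<theta> t \<omega>) powr (1 / lam)))"
proof (intro exI[of _ th] conjI allI impI)
  show "supermartingale M F th"
    unfolding supermartingale_def adapted_def using th_N th_int supermart by blast
qed (use th_pos LT_prop in auto)

end


theorem proposition10:
  fixes M :: "'a measure" and F :: "real \<Rightarrow> 'a measure"
    and \<pi> :: "real \<Rightarrow> 'a \<Rightarrow> real" and lam :: real
  assumes "prob_space M"
    and "filtration_on M F"
    and "usual_conditions M F"
    and "pricing_kernel M F \<pi>"
    and "lam > 0"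
    and "asymptotically_tail_pareto M \<pi> lam"
  shows "\<exists>\<theta>. supermartingale M F \<theta> \<and> (\<forall>t\<ge>0. AE \<omega> in M. \<theta> t \<omega> > 0) \<and>
           (\<forall>t\<ge>0. AE \<omega> in M.
              0 < long_tail_pareto_rate M F \<pi> lam t \<omega> \<and>
              long_tail_pareto_rate M F \<pi> lam t \<omega> < \<infinity> \<and>
              long_tail_pareto_rate M F \<pi> lam t \<omega> = ereal (lam * (\<pi> t \<omega> / \<theta> t \<omega>) powr (1 / lam)))"
proof -
  interpret pk_setting M F \<pi> lam
    using assms by (simp add: pk_setting_def)
  show ?thesis by (rule main)
qed

end
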